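(* For every integer $\nu\ge12$, $c_\nu\le\frac14+\frac{1}{3\sqrt\nu-10}$.
   Context: A weighted digraph $D=(V,A,w)$ is a digraph without loops or parallel arcs (opposite arcs allowed) with weights $w:A\to\mathbb{R}_{\ge0}$ (no lower bound on weights); $w(D)$ is the total arc weight. For a partition $(X,Y)$ of $V$, $w(X,Y)$ is the total weight of arcs from $X$ to $Y$, and $\mathrm{mac}(D)=\max_{(X,Y)}w(X,Y)$. For an integer $\nu\ge1$, $c_\nu$ is the supremum of reals $c\ge0$ such that every acyclic weighted digraph $D$ whose longest directed path has exactly $\nu$ vertices satisfies $\mathrm{mac}(D)\ge c\cdot w(D)$. *)

theory Defs
  imports Complex_Main
begin

text \<open>A weighted digraph on a finite vertex set V (vertices are natural numbers, which
is no loss of generality since every finite digraph is isomorphic to one on nat):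
arcs A \<subseteq> V \<times> V without loops (parallel arcs are impossible for a set of pairs;
opposite arcs are allowed), and nonnegative weights on the arcs.\<close>
definition wdigraph :: "nat set \<Rightarrow> (nat \<times> nat) set \<Rightarrow> (nat \<times> nat \<Rightarrow> real) \<Rightarrow> bool" where
  "wdigraph V A w \<longleftrightarrow> finite V \<and> A \<subseteq> V \<times> V \<and> (\<forall>u v. (u, v) \<in> A \<longrightarrow> u \<noteq> v)
     \<and> (\<forall>a\<in>A. 0 \<le> w a)"

definition dpath :: "nat set \<Rightarrow> (nat \<times> nat) set \<Rightarrow> nat list \<Rightarrow> bool" where
  "dpath V A p \<longleftrightarrow> p \<noteq> [] \<and> distinct p \<and> set p \<subseteq> V \<and> successively (\<lambda>u v. (u, v) \<in> A) p"

definition longest_path_vertices :: "nat set \<Rightarrow> (nat \<times> nat) set \<Rightarrow> nat \<Rightarrow> bool" where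
  "longest_path_vertices V A \<nu> \<longleftrightarrow>
     (\<exists>p. dpath V A p \<and> length p = \<nu>) \<and> (\<forall>p. dpath V A p \<longrightarrow> length p \<le> \<nu>)"

definition total_weight :: "(nat \<times> nat) set \<Rightarrow> (nat \<times> nat \<Rightarrow> real) \<Rightarrow> real" where
  "total_weight A w = (\<Sum>a\<in>A. w a)"

definition cut_weight :: "(nat \<times> nat) set \<Rightarrow> (nat \<times> nat \<Rightarrow> real) \<Rightarrow> nat set \<Rightarrow> nat set \<Rightarrow> real" where
  "cut_weight A w X Y = (\<Sum>a\<in>{(x, y) \<in> A. x \<in> X \<and> y \<in> Y}. w a)"

definition mac :: "nat set \<Rightarrow> (nat \<times> nat) set \<Rightarrow> (nat \<times> nat \<Rightarrow> real) \<Rightarrow> real" where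
  "mac V A w = Max ((\<lambda>X. cut_weight A w X (V - X)) ` Pow V)"

definition c_nu :: "nat \<Rightarrow> real" where
  "c_nu \<nu> = Sup {c. 0 \<le> c \<and> (\<forall>V A w. wdigraph V A w \<and> acyclic A \<and> longest_path_vertices V A \<nu>
                     \<longrightarrow> mac V A w \<ge> c * total_weight A w)}"

end

theory Submission imports Defs begin

lemma shift_sum:
  fixes g :: "nat \<Rightarrow> real"
  assumes per: "\<And>t. g (t + n) = g t"
  shows "(\<Sum>t<n. g (t + p)) = (\<Sum>t<n. g t)"
proof (induction p)
  case 0 then show ?case by simp
next
  case (Suc p)
  have "(\<Sum>t<Suc n. g (t + p)) = g (0 + p) + (\<Sum>t<n. g (Suc t + p))"
    by (rule sum.lessThan_Suc_shift)
  moreover have "(\<Sum>t<Suc n. g (t + p)) = (\<Sum>t<n. g (t + p)) + g (n + p)"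
    by simp
  moreover have "g (n + p) = g p" using per[of p] by (simp add: add.commute)
  ultimately show ?case using Suc by simp
qed

lemma rev_sum:
  fixes h :: "nat \<Rightarrow> real"
  shows "(\<Sum>p\<le>k. h (Suc k - p)) = (\<Sum>d\<in>{1..Suc k}. h d)"
proof (induction k)
  case 0 then show ?case by simp
next
  case (Suc k)
  have "(\<Sum>p\<le>Suc k. h (Suc (Suc k) - p)) = h (Suc (Suc k)) + (\<Sum>p\<le>k. h (Suc (Suc k) - Suc p))"
    by (subst sum.atMost_Suc_shift) simp
  also have "\<dots> = h (Suc (Suc k)) + (\<Sum>d\<in>{1..Suc k}. h d)" using Suc by simp
  also have "\<dots> = (\<Sum>d\<in>{1..Suc (Suc k)}. h d)" by (simp add: add.commute)
  finally show ?case .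
qed

lemma double_abs:
  fixes h :: "nat \<Rightarrow> real"
  shows "(\<Sum>p\<le>k. \<Sum>q\<le>k. h (if p \<le> q then q - p else p - q))
       = real (k+1) * h 0 + 2 * (\<Sum>d\<in>{1..k}. real (k+1-d) * h d)"
proof (induction k)
  case 0 then show ?case by simp
next
  case (Suc k)
  let ?f = "\<lambda>p q. h (if p \<le> q then q - p else p - q)"
  have "(\<Sum>p\<le>Suc k. \<Sum>q\<le>Suc k. ?f p q) = (\<Sum>p\<le>k. \<Sum>q\<le>k. ?f p q)
      + (\<Sum>p\<le>k. ?f p (Suc k)) + (\<Sum>q\<le>k. ?f (Suc k) q) + h 0"
    by (simp add: sum.distrib)
  also have "(\<Sum>p\<le>k. ?f p (Suc k)) = (\<Sum>d\<in>{1..Suc k}. h d)"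
  proof -
    have "(\<Sum>p\<le>k. ?f p (Suc k)) = (\<Sum>p\<le>k. h (Suc k - p))" by (rule sum.cong) auto
    then show ?thesis using rev_sum[of h k] by simp
  qed
  also have "(\<Sum>q\<le>k. ?f (Suc k) q) = (\<Sum>d\<in>{1..Suc k}. h d)"
  proof -
    have "(\<Sum>q\<le>k. ?f (Suc k) q) = (\<Sum>p\<le>k. h (Suc k - p))" by (rule sum.cong) auto
    then show ?thesis using rev_sum[of h k] by simp
  qed
  also have "(\<Sum>d\<in>{1..Suc k}. real (Suc k + 1 - d) * h d)
      = (\<Sum>d\<in>{1..k}. real (k + 1 - d) * h d) + (\<Sum>d\<in>{1..Suc k}. h d)"
  proof -
    have "(\<Sum>d\<in>{1..Suc k}. real (Suc k + 1 - d) * h d)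
        = (\<Sum>d\<in>{1..Suc k}. real (k + 1 - d) * h d + h d)"
      by (intro sum.cong) (auto simp: algebra_simps of_nat_diff)
    also have "\<dots> = (\<Sum>d\<in>{1..Suc k}. real (k + 1 - d) * h d) + (\<Sum>d\<in>{1..Suc k}. h d)"
      by (simp add: sum.distrib)
    also have "(\<Sum>d\<in>{1..Suc k}. real (k + 1 - d) * h d) = (\<Sum>d\<in>{1..k}. real (k + 1 - d) * h d)"
      by simp
    finally show ?thesis .
  qed
  ultimately show ?case using Suc by (simp add: algebra_simps)
qed

lemma sum_coef:
  "(\<Sum>d\<in>{1..k}. real (k+1-d)) = real k * (real k + 1) / 2"
proof (induction k)
  case 0 then show ?case by simp
next
  case (Suc k)
  have "(\<Sum>d\<in>{1..Suc k}. real (Suc k+1-d)) = (\<Sum>d\<in>{1..Suc k}. real (k+1-d) + 1)"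
    by (intro sum.cong) (auto simp: of_nat_diff)
  also have "\<dots> = (\<Sum>d\<in>{1..Suc k}. real (k+1-d)) + real (Suc k)"
    by (subst sum.distrib) simp
  also have "(\<Sum>d\<in>{1..Suc k}. real (k+1-d)) = (\<Sum>d\<in>{1..k}. real (k+1-d))"
    by (simp add: sum.cl_ivl_Suc)
  finally show ?case using Suc by (simp add: field_simps)
qed

lemma cyclic_bound:
  fixes x :: "nat \<Rightarrow> real" and n k :: nat
  assumes x01: "\<And>t. x t = 0 \<or> x t = 1" and per: "\<And>t. x (t+n) = x t"
  shows "(\<Sum>d\<in>{1..k}. real (k+1-d) * (\<Sum>t<n. x t * (1 - x (t+d)))) \<le> real n * (real k + 1)^2 / 8"
proof -
  define z where "z t = 2 * x t - 1" for t
  define R where "R d = (\<Sum>t<n. z t * z (t+d))" for d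
  have zper: "\<And>t. z (t+n) = z t" by (simp add: z_def per)
  have zsq: "z t * z t = 1" for t using x01[of t] by (auto simp: z_def)
  have zshift: "(\<Sum>t<n. z (t + d)) = (\<Sum>t<n. z t)" for d
    by (rule shift_sum) (simp add: zper)
  have inner: "(\<Sum>t<n. x t * (1 - x (t+d))) = (real n - R d)/4" for d
  proof -
    have "(\<Sum>t<n. x t * (1 - x (t+d))) = (\<Sum>t<n. (1 + z t - z (t+d) - z t * z (t+d))/4)"
      by (intro sum.cong) (auto simp: z_def algebra_simps)
    also have "\<dots> = (real n + (\<Sum>t<n. z t) - (\<Sum>t<n. z (t+d)) - R d)/4"
      by (simp add: R_def sum_divide_distrib[symmetric] sum.distrib sum_subtractf)
    finally show ?thesis using zshift[of d] by simp
  qed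
  have R0: "R 0 = real n" by (simp add: R_def zsq)
  have key: "(\<Sum>t<n. z (t+p) * z (t+q)) = R (if p \<le> q then q - p else p - q)" for p q
  proof (cases "p \<le> q")
    case True
    define g where "g t = z t * z (t + (q - p))" for t
    have "(\<Sum>t<n. g (t + p)) = (\<Sum>t<n. g t)"
      proof (rule shift_sum)
      fix t show "g (t + n) = g t" unfolding g_def using zper[of t] zper[of "t + (q - p)"] by (simp add: ac_simps)
    qed
    moreover have "\<And>t. g (t + p) = z (t+p) * z (t+q)" using True by (simp add: g_def)
    ultimately show ?thesis using True by (simp add: R_def g_def)
  next
    case False
    define g where "g t = z t * z (t + (p - q))" for t
    have "(\<Sum>t<n. g (t + q)) = (\<Sum>t<n. g t)"
      proof (rule shift_sum)
      fix t show "g (t + n) = g t" unfolding g_def using zper[of t] zper[of "t + (p - q)"] by (simp add: ac_simps)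
    qed
    moreover have "\<And>t. g (t + q) = z (t+p) * z (t+q)" using False by (simp add: g_def mult.commute)
    ultimately show ?thesis using False by (simp add: R_def g_def mult.commute)
  qed
  have "0 \<le> (\<Sum>t<n. (\<Sum>p\<le>k. z (t+p))^2)" by (intro sum_nonneg) simp
  also have "\<dots> = (\<Sum>t<n. \<Sum>p\<le>k. \<Sum>q\<le>k. z (t+p) * z (t+q))"
    by (simp add: power2_eq_square sum_product)
  also have "\<dots> = (\<Sum>p\<le>k. \<Sum>q\<le>k. \<Sum>t<n. z (t+p) * z (t+q))"
    by (subst sum.swap) (simp add: sum.swap[of _ "{..k}" "{..<n}"])
  also have "\<dots> = (\<Sum>p\<le>k. \<Sum>q\<le>k. R (if p \<le> q then q - p else p - q))"
    by (simp add: key)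
  also have "\<dots> = real (k+1) * real n + 2 * (\<Sum>d\<in>{1..k}. real (k+1-d) * R d)"
    by (simp add: double_abs R0)
  finally have win: "- (\<Sum>d\<in>{1..k}. real (k+1-d) * R d) \<le> real (k+1) * real n / 2" by simp
  have "(\<Sum>d\<in>{1..k}. real (k+1-d) * (\<Sum>t<n. x t * (1 - x (t+d))))
      = (\<Sum>d\<in>{1..k}. real (k+1-d) * (real n - R d)/4)"
    by (simp add: inner)
  also have "\<dots> = (real n * (\<Sum>d\<in>{1..k}. real (k+1-d)) - (\<Sum>d\<in>{1..k}. real (k+1-d) * R d))/4"
    by (simp add: sum_divide_distrib[symmetric] sum_subtractf right_diff_distrib sum_distrib_left mult.commute)
  also have "\<dots> \<le> (real n * (real k * (real k + 1) / 2) + real (k+1) * real n / 2)/4"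
    unfolding sum_coef by (rule divide_right_mono) (use win in linarith)+
  also have "\<dots> = real n * (real k + 1)^2 / 8" by (simp add: field_simps power2_eq_square)
  finally show ?thesis .
qed

definition GA :: "nat \<Rightarrow> nat \<Rightarrow> (nat \<times> nat) set" where
  "GA n k = {(i,j). i < j \<and> j < n \<and> j \<le> i + k}"

definition Gw :: "nat \<Rightarrow> nat \<times> nat \<Rightarrow> real" where
  "Gw k p = real (k+1) + real (fst p) - real (snd p)"

lemma GA_finite: "finite (GA n k)"
  by (rule finite_subset[of _ "{..<n} \<times> {..<n}"]) (auto simp: GA_def)

lemma GA_sum:
  fixes f :: "nat \<times> nat \<Rightarrow> real"
  shows "(\<Sum>a\<in>GA n k. f a) = (\<Sum>i<n. \<Sum>d\<in>{1..k}. if i + d < n then f (i, i+d) else 0)"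
proof -
  let ?S = "SIGMA i:{..<n}. {d\<in>{1..k}. i+d<n}"
  have eq: "GA n k = (\<lambda>(i,d). (i,i+d)) ` ?S"
  proof (rule set_eqI)
    fix a show "a \<in> GA n k \<longleftrightarrow> a \<in> (\<lambda>(i,d). (i,i+d)) ` ?S"
    proof (cases a)
      case (Pair i j)
      show ?thesis
      proof
        assume "a \<in> GA n k"
        then have "(i, j - i) \<in> ?S" "a = (\<lambda>(i,d). (i,i+d)) (i, j - i)"
          using Pair by (auto simp: GA_def)
        then show "a \<in> (\<lambda>(i,d). (i,i+d)) ` ?S" by blast
      qed (auto simp: GA_def Pair)
    qed
  qed
  have inj: "inj_on (\<lambda>(i,d). (i,i+d)) ?S" by (auto simp: inj_on_def)
  have "(\<Sum>a\<in>GA n k. f a) = (\<Sum>p\<in>?S. f ((\<lambda>(i,d). (i,i+d)) p))"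
    unfolding eq by (rule sum.reindex[OF inj, unfolded comp_def])
  also have "\<dots> = (\<Sum>p\<in>?S. (case p of (i,d) \<Rightarrow> f (i, i+d)))"
    by (intro sum.cong refl) auto
  also have "\<dots> = (\<Sum>i<n. \<Sum>d\<in>{d\<in>{1..k}. i+d<n}. f (i, i+d))"
    by (subst sum.Sigma) auto
  also have "\<dots> = (\<Sum>i<n. \<Sum>d\<in>{1..k}. if i + d < n then f (i, i+d) else 0)"
    by (intro sum.cong refl sum.inter_filter) simp
  finally show ?thesis .
qed

lemma sum_nd: "(\<Sum>d\<in>{1..k}. real n - real d) = real k * real n - real k * (real k + 1) / 2"
  by (induction k) (auto simp: field_simps)

lemma sum_W: "(\<Sum>d\<in>{1..k}. real (k+1-d) * (real n - real d))
    = real k * (real k + 1) * (3 * real n - real k - 2) / 6"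
proof (induction k)
  case 0 then show ?case by simp
next
  case (Suc k)
  have "(\<Sum>d\<in>{1..Suc k}. real (Suc k+1-d) * (real n - real d))
      = (\<Sum>d\<in>{1..Suc k}. real (k+1-d) * (real n - real d) + (real n - real d))"
    by (intro sum.cong) (auto simp: of_nat_diff algebra_simps)
  also have "\<dots> = (\<Sum>d\<in>{1..Suc k}. real (k+1-d) * (real n - real d)) + (\<Sum>d\<in>{1..Suc k}. real n - real d)"
    by (rule sum.distrib)
  also have "(\<Sum>d\<in>{1..Suc k}. real (k+1-d) * (real n - real d)) = (\<Sum>d\<in>{1..k}. real (k+1-d) * (real n - real d))"
    by (simp add: sum.cl_ivl_Suc)
  also have "(\<Sum>d\<in>{1..k}. real (k+1-d) * (real n - real d)) + (\<Sum>d\<in>{1..Suc k}. real n - real d)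
     = real k * (real k + 1) * (3 * real n - real k - 2) / 6 + (real (Suc k) * real n - real (Suc k) * (real (Suc k) + 1) / 2)"
    by (simp only: Suc.IH sum_nd)
  also have "\<dots> = real (Suc k) * (real (Suc k) + 1) * (3 * real n - real (Suc k) - 2) / 6"
    by (simp add: field_simps)
  finally show ?case .
qed

lemma total_GA:
  assumes "k < n"
  shows "total_weight (GA n k) (Gw k) = real k * (real k + 1) * (3 * real n - real k - 2) / 6"
proof -
  have "total_weight (GA n k) (Gw k) = (\<Sum>i<n. \<Sum>d\<in>{1..k}. if i + d < n then real (k+1-d) else 0)"
    unfolding total_weight_def GA_sum
    by (intro sum.cong refl) (auto simp: Gw_def of_nat_diff)
  also have "\<dots> = (\<Sum>d\<in>{1..k}. \<Sum>i<n. if i + d < n then real (k+1-d) else 0)"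
    by (rule sum.swap)
  also have "\<dots> = (\<Sum>d\<in>{1..k}. real (k+1-d) * (real n - real d))"
  proof (intro sum.cong refl)
    fix d assume d: "d \<in> {1..k}"
    have "(\<Sum>i<n. if i + d < n then real (k+1-d) else 0) = (\<Sum>i\<in>{i\<in>{..<n}. i + d < n}. real (k+1-d))"
      by (rule sum.inter_filter[symmetric]) simp
    also have "{i\<in>{..<n}. i + d < n} = {..<n-d}" by auto
    finally show "(\<Sum>i<n. if i + d < n then real (k+1-d) else 0) = real (k+1-d) * (real n - real d)"
      using d assms by (simp add: of_nat_diff)
  qed
  finally show ?thesis using sum_W by simp
qed

lemma lin_aux:
  fixes A B C u K :: real
  assumes "A + 33*B \<le> C + 33*u" "0 \<le> A + 18*B + 17*K"
  shows "0 \<le> (C + 33*u - 15*B + 17*K)/2"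
  using assms by simp

lemma arith_main:
  fixes n k :: nat
  assumes n12: "n \<ge> 12" and k1: "k * k \<le> 3 * n" and k2: "3 * n < (k+1) * (k+1)" and kpos: "k \<ge> 1"
  shows "real n * (real k + 1)^2 / 8 \<le> (1/4 + 1 / (3 * sqrt (real n) - 10)) * (real k * (real k + 1) * (3 * real n - real k - 2) / 6)"
proof -
  define K where "K = real k"
  define u where "u = 3 * real n"
  define q where "q = 3 * sqrt (real n) - 10"
  have K1: "K \<ge> 1" using kpos by (simp add: K_def)
  have "real (k * k) \<le> real (3 * n)" using k1 by (simp only: of_nat_le_iff)
  then have Ku: "K * K \<le> u" unfolding K_def u_def by simp
  have "real (3 * n) < real ((k+1) * (k+1))" using k2 by (simp only: of_nat_less_iff)
  then have uK: "u < (K+1)*(K+1)" unfolding K_def u_def by (simp add: algebra_simps)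
  have "sqrt 12 > 10/3"
    by (rule real_less_rsqrt) (simp add: power2_eq_square)
  moreover have "sqrt (real n) \<ge> sqrt 12" using n12 by simp
  ultimately have qpos: "q > 0" unfolding q_def by linarith
  have "(3 * sqrt (real n))^2 = 9 * real n" by (simp add: power_mult_distrib)
  also have "\<dots> < (7 * (K+1) / 4)^2" using uK unfolding u_def by (simp add: power2_eq_square field_simps)
  finally have "3 * sqrt (real n) < 7 * (K+1) / 4"
    by (rule power2_less_imp_less) (use K1 in simp)
  then have qle: "q \<le> 7 * (K+1)/4 - 10" unfolding q_def by simp
  have poly: "(7 * (K+1)/4 - 10) * (2*u + 2*K) \<le> 4 * K * (u - K - 2)"
  proof -
    have "(K + 33) * (K*K) \<le> (K + 33) * u" using Ku K1 by (intro mult_left_mono) auto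
    then have a: "K*K*K + 33*(K*K) \<le> K*u + 33*u" by (simp add: algebra_simps)
    have b: "0 \<le> K*K*K + 18*(K*K) + 17*K" using K1 by simp
    have e: "4*K*(u-K-2) - (7*(K+1)/4 - 10)*(2*u+2*K) = (K*u + 33*u - 15*(K*K) + 17*K)/2"
      by (simp add: field_simps)
    have "0 \<le> (K*u + 33*u - 15*(K*K) + 17*K)/2" using lin_aux[OF a b] .
    then show ?thesis unfolding e[symmetric] by linarith
  qed
  have main: "q * (u + K*K + 2*K) \<le> 4 * K * (u - K - 2)"
  proof -
    have "q * (u + K*K + 2*K) \<le> q * (2*u + 2*K)" using Ku qpos by (intro mult_left_mono) auto
    also have "\<dots> \<le> (7 * (K+1)/4 - 10) * (2*u + 2*K)" using qle K1 Ku
      by (intro mult_right_mono) (auto simp: u_def)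
    finally show ?thesis using poly by linarith
  qed
  have W: "real k * (real k + 1) * (3 * real n - real k - 2) / 6 = K * (K+1) * (u - K - 2) / 6"
    by (simp add: K_def u_def)
  have eq1: "real n * (real k + 1)^2 / 8 = K * (K+1) * (u - K - 2) / 6 / 4 + (K+1) * (u + K*K + 2*K) / 24"
    by (simp add: K_def u_def power2_eq_square field_simps)
  have step: "(K+1) * (u + K*K + 2*K) / 24 \<le> K * (K+1) * (u - K - 2) / 6 / q"
  proof -
    have "(K+1) * (q * (u + K*K + 2*K)) \<le> (K+1) * (4 * K * (u - K - 2))"
      using main K1 by (intro mult_left_mono) auto
    then show ?thesis using qpos by (simp add: field_simps)
  qed
  have fin: "real n * (real k + 1)^2 / 8 \<le> K * (K+1) * (u - K - 2) / 6 / 4 + K * (K+1) * (u - K - 2) / 6 / q"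
    using eq1 step by linarith
  have eq: "(1/4 + 1/q) * (K * (K+1) * (u - K - 2) / 6) = K * (K+1) * (u - K - 2) / 6 / 4 + K * (K+1) * (u - K - 2) / 6 / q"
    by (simp add: distrib_right)
  show ?thesis unfolding W q_def[symmetric] eq by (rule fin)
qed

lemma cut_GA:
  assumes X: "X \<subseteq> {0..<n}"
  shows "cut_weight (GA n k) (Gw k) X ({0..<n} - X) \<le> real n * (real k + 1)^2 / 8"
proof -
  define x where "x t = (if t mod n \<in> X then 1 else 0 :: real)" for t
  have per: "x (t + n) = x t" for t by (simp add: x_def)
  have x01: "x t = 0 \<or> x t = 1" for t by (simp add: x_def)
  have "cut_weight (GA n k) (Gw k) X ({0..<n} - X)
      = (\<Sum>a\<in>{a\<in>GA n k. fst a \<in> X \<and> snd a \<in> {0..<n} - X}. Gw k a)"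
    unfolding cut_weight_def by (rule sum.cong) auto
  also have "\<dots> = (\<Sum>a\<in>GA n k. if fst a \<in> X \<and> snd a \<in> {0..<n} - X then Gw k a else 0)"
    by (rule sum.inter_filter[OF GA_finite])
  also have "\<dots> = (\<Sum>i<n. \<Sum>d\<in>{1..k}. if i + d < n then
        (if i \<in> X \<and> i + d \<in> {0..<n} - X then Gw k (i, i+d) else 0) else 0)"
    by (subst GA_sum) (simp only: fst_conv snd_conv)
  also have "\<dots> \<le> (\<Sum>i<n. \<Sum>d\<in>{1..k}. real (k+1-d) * (x i * (1 - x (i+d))))"
  proof (intro sum_mono)
    fix i d assume i: "i \<in> {..<n}" and d: "d \<in> {1..k}"
    have c: "real (k+1-d) \<ge> 0" by simp
    have xx: "0 \<le> x i * (1 - x (i+d))" using x01[of i] x01[of "i+d"] by auto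
    show "(if i + d < n then (if i \<in> X \<and> i + d \<in> {0..<n} - X then Gw k (i, i+d) else 0) else 0)
        \<le> real (k+1-d) * (x i * (1 - x (i+d)))"
    proof (cases "i + d < n")
      case True
      then have "x i = (if i \<in> X then 1 else 0)" "x (i+d) = (if i + d \<in> X then 1 else 0)"
        using i by (auto simp: x_def)
      moreover have "Gw k (i, i+d) = real (k+1-d)" using d by (simp add: Gw_def of_nat_diff)
      ultimately show ?thesis using True by auto
    next
      case False
      then show ?thesis using c xx by simp
    qed
  qed
  also have "\<dots> = (\<Sum>d\<in>{1..k}. real (k+1-d) * (\<Sum>i<n. x i * (1 - x (i+d))))"
    by (subst sum.swap) (simp add: sum_distrib_left)
  also have "\<dots> \<le> real n * (real k + 1)^2 / 8"
    by (rule cyclic_bound[where x=x and n=n and k=k, OF x01 per])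
  finally show ?thesis .
qed

lemma succ_upt: "successively (\<lambda>u v. v = Suc u) [m..<n]"
proof (induction n)
  case 0 then show ?case by simp
next
  case (Suc n)
  show ?case
  proof (cases "m \<le> n")
    case True
    then show ?thesis using Suc
      by (cases "m < n") (auto simp: successively_append_iff)
  next
    case False then show ?thesis by simp
  qed
qed

lemma GA_props:
  assumes "1 \<le> k" "0 < n"
  shows "wdigraph {0..<n} (GA n k) (Gw k)" "acyclic (GA n k)" "longest_path_vertices {0..<n} (GA n k) n"
proof -
  show "wdigraph {0..<n} (GA n k) (Gw k)"
    unfolding wdigraph_def by (auto simp: GA_def Gw_def)
  have "GA n k \<subseteq> less_than" by (auto simp: GA_def)
  then show "acyclic (GA n k)" using acyclic_subset[OF wf_acyclic[OF wf_less_than]] by blast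
  have "dpath {0..<n} (GA n k) [0..<n]"
    unfolding dpath_def using assms
    by (auto intro!: successively_mono[OF succ_upt] simp: GA_def)
  moreover have "length p \<le> n" if "dpath {0..<n} (GA n k) p" for p
  proof -
    have "length p = card (set p)" using that by (simp add: dpath_def distinct_card)
    also have "\<dots> \<le> card {0..<n}" using that by (intro card_mono) (auto simp: dpath_def)
    finally show ?thesis by simp
  qed
  ultimately show "longest_path_vertices {0..<n} (GA n k) n"
    unfolding longest_path_vertices_def by auto
qed

lemma mac_nonneg:
  assumes "wdigraph V A w"
  shows "0 \<le> mac V A w"
proof -
  have fin: "finite V" using assms by (simp add: wdigraph_def)
  have "cut_weight A w {} (V - {}) = 0" by (simp add: cut_weight_def)
  moreover have "cut_weight A w {} (V - {}) \<le> mac V A w"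
    unfolding mac_def by (rule Max_ge) (use fin in \<open>auto intro: image_eqI[where x="{}"]\<close>)
  ultimately show ?thesis by simp
qed

lemma mac_GA:
  "mac {0..<n} (GA n k) (Gw k) \<le> real n * (real k + 1)^2 / 8"
  unfolding mac_def
proof (rule Max.boundedI)
  fix a assume "a \<in> (\<lambda>X. cut_weight (GA n k) (Gw k) X ({0..<n} - X)) ` Pow {0..<n}"
  then obtain X where "X \<subseteq> {0..<n}" "a = cut_weight (GA n k) (Gw k) X ({0..<n} - X)" by blast
  then show "a \<le> real n * (real k + 1)^2 / 8" using cut_GA by simp
qed auto

lemma exists_isqrt: "\<exists>k::nat. k * k \<le> m \<and> m < (k+1) * (k+1)"
proof (induction m)
  case 0 then show ?case by (intro exI[of _ 0]) simp
next
  case (Suc m)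
  then obtain k where k: "k * k \<le> m" "m < (k+1) * (k+1)" by blast
  show ?case
  proof (cases "Suc m < (k+1)*(k+1)")
    case True then show ?thesis using k by (intro exI[of _ k]) simp
  next
    case False
    then have "Suc m = (k+1)*(k+1)" using k by simp
    then show ?thesis by (intro exI[of _ "k+1"]) simp
  qed
qed

theorem mainTheorem13:
  fixes \<nu> :: nat
  assumes "\<nu> \<ge> 12"
  shows "c_nu \<nu> \<le> 1/4 + 1 / (3 * sqrt (real \<nu>) - 10)"
proof -
  define n where "n = \<nu>"
  have n12: "n \<ge> 12" using assms by (simp add: n_def)
  obtain k :: nat where k1: "k * k \<le> 3 * n" and k2: "3 * n < (k+1) * (k+1)"
    using exists_isqrt by blast
  have kge: "k \<ge> 1"
  proof (rule ccontr)
    assume "\<not> k \<ge> 1" then have "k = 0" by simp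
    then show False using k2 n12 by simp
  qed
  have kn: "k < n"
  proof (rule ccontr)
    assume "\<not> k < n" then have "n \<le> k" by simp
    then have "n * n \<le> k * k" by (intro mult_le_mono) auto
    moreover have "3 * n < n * n" using n12 by (intro mult_strict_right_mono) auto
    ultimately show False using k1 by simp
  qed
  define B where "B = 1/4 + 1 / (3 * sqrt (real n) - 10)"
  define W where "W = real k * (real k + 1) * (3 * real n - real k - 2) / 6"
  have TW: "total_weight (GA n k) (Gw k) = W" unfolding W_def by (rule total_GA[OF kn])
  have Wpos: "W > 0"
  proof -
    have "real k + 2 < 3 * real n" using kn by linarith
    then show ?thesis unfolding W_def using kge by (intro divide_pos_pos mult_pos_pos) auto
  qed
  have props: "wdigraph {0..<n} (GA n k) (Gw k)" "acyclic (GA n k)"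
    "longest_path_vertices {0..<n} (GA n k) n"
    using GA_props[OF kge] n12 by auto
  have ar: "real n * (real k + 1)^2 / 8 \<le> B * W"
    unfolding B_def W_def by (rule arith_main[OF n12 k1 k2 kge])
  let ?S = "{c. 0 \<le> c \<and> (\<forall>V A w. wdigraph V A w \<and> acyclic A \<and> longest_path_vertices V A n
                     \<longrightarrow> mac V A w \<ge> c * total_weight A w)}"
  have ne: "0 \<in> ?S" using mac_nonneg by auto
  have ub: "c \<le> B" if "c \<in> ?S" for c
  proof -
    have "c * W \<le> mac {0..<n} (GA n k) (Gw k)" using that props TW by auto
    also have "\<dots> \<le> B * W" using mac_GA ar by (rule order_trans)
    finally show ?thesis using Wpos by simp
  qed
  have "Sup ?S \<le> B" by (rule cSup_least) (use ne ub in auto)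
  then show ?thesis unfolding c_nu_def B_def n_def .
qed

end
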